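(* Assume (A1)–(A3) below and let $\mu>0$, $\eta>0$. Then: (i) For all $y,w\in\mathbb{R}^n$, $$\big(\|\hat x^\eta_1(y)-\hat x^\eta_1(w)\|,\dots,\|\hat x^\eta_N(y)-\hat x^\eta_N(w)\|\big)^\top\le\Gamma_1\big(\|y_1-w_1\|,\dots,\|y_N-w_N\|\big)^\top$$ componentwise; consequently $\hat x^\eta$ is a contraction with respect to the norm $\|x\|_\ast\triangleq\|(\|x_1\|,\dots,\|x_N\|)\|_2$ and has a unique fixed point $x^*$. (ii) A point $x^*$ is a fixed point of $\hat x^\eta$ if and only if it is a Nash equilibrium of the game; hence the game has a unique Nash equilibrium. (iii) If the tolerances satisfy $\varepsilon_i^k\ge0$ and $\sum_{k=0}^\infty\varepsilon_i^k<\infty$ for every $i$, then the MS-SBR iterates satisfy $x^k\to x^*$ almost surely. Assumptions: (A1) for each $i$ and each $x_{-i}$, $f_i(\cdot,x_{-i})$ is $\sigma_i$-strongly convex ($\sigma_i>0$) and continuous; (A2) for each $i$ and each $x_i$, $\|\nabla_{x_i}\bar f_i^\eta(x_i,y_{-i})-\nabla_{x_i}\bar f_i^\eta(x_i,w_{-i})\|\le\bar L_{-i}\|y_{-i}-w_{-i}\|$ for all $y_{-i},w_{-i}$; (A3) the spectral norm of $\Gamma_1$ satisfies $\|\Gamma_1\|<1$.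
   Context: $N$-player game: player $i$ has nonempty closed convex $X_i\subseteq\mathbb{R}^{n_i}$ and real-valued objective $f_i:\mathbb{R}^{n}\to\mathbb{R}$ (with $n=\sum_in_i$, $x=(x_i,x_{-i})$), $f_i(x)=\mathbb{E}[\tilde f_i(x,\boldsymbol\xi)]$; $X=\prod_iX_i$. A Nash equilibrium is $x^*\in X$ with $f_i(x_i^*,x_{-i}^* )\le f_i(x_i,x^*_{-i})$ for all $x_i\in X_i$, all $i$. Let $\bar f_i(\cdot,x_{-i})=f_i(\cdot,x_{-i})+\mathbf{1}_{X_i}$ (indicator of $X_i$) and $\bar f_i^\eta(x_i,x_{-i})=\min_{y}\{\bar f_i(y,x_{-i})+\frac1{2\eta}\|y-x_i\|^2\}$ its Moreau envelope in $x_i$. Best-response map: $\hat x^\eta_i(x)\triangleq\operatorname*{argmin}_{z\in\mathbb{R}^{n_i}}\{\bar f_i^\eta(z,x_{-i})+\frac\mu2\|z-x_i\|^2\}$, $\hat x^\eta=(\hat x^\eta_i)_{i=1}^N$. The matrix $\Gamma_1\in\mathbb{R}^{N\times N}$ has entries $(\Gamma_1)_{ii}=\frac{\mu}{\sigma_i/(\eta\sigma_i+1)+\mu}$ and $(\Gamma_1)_{ij}=\frac{\bar L_{-i}}{\sigma_i/(\eta\sigma_i+1)+\mu}$ for $j\ne i$. MS-SBR: given $x^0\in X$ and tolerances $\varepsilon_i^k\ge0$, at each iteration $k$ every player $i$ produces a random $x_i^{k+1}\in X_i$ with $\mathbb{E}[\|x_i^{k+1}-\hat x_i^\eta(x^k)\|^2\mid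 x^k]\le(\varepsilon_i^k)^2$ a.s. *)

theory Defs
  imports "HOL-Analysis.Analysis" "HOL-Probability.Probability"
begin

text \<open>Players are the elements of a finite type 'p, coordinates of R^n are the elements
of a finite type 'n, and blk j is the player owning coordinate j.  Player i's space
R^(n_i) is identified with the coordinate subspace bsub blk i.\<close>

definition bsub :: "('n::finite \<Rightarrow> 'p) \<Rightarrow> 'p \<Rightarrow> (real^'n) set" where
  "bsub blk i = {v. \<forall>j. blk j \<noteq> i \<longrightarrow> v $ j = 0}"

definition bproj :: "('n::finite \<Rightarrow> 'p) \<Rightarrow> 'p \<Rightarrow> real^'n \<Rightarrow> real^'n" where
  "bproj blk i x = (\<chi> j. if blk j = i then x $ j else 0)"

definition bothers :: "('n::finite \<Rightarrow> 'p) \<Rightarrow> 'p \<Rightarrow> real^'n \<Rightarrow> real^'n" where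
  "bothers blk i x = (\<chi> j. if blk j = i then 0 else x $ j)"

definition bupd :: "('n::finite \<Rightarrow> 'p) \<Rightarrow> 'p \<Rightarrow> real^'n \<Rightarrow> real^'n \<Rightarrow> real^'n" where
  "bupd blk i z x = (\<chi> j. if blk j = i then z $ j else x $ j)"

definition starnorm :: "('n::finite \<Rightarrow> 'p::finite) \<Rightarrow> real^'n \<Rightarrow> real" where
  "starnorm blk x = norm (\<chi> i. norm (bproj blk i x))"

text \<open>sigma-strong convexity (convention: f - sigma/2 ||.||^2 convex)\<close>
definition strongly_convex_on :: "'a::real_normed_vector set \<Rightarrow> ('a \<Rightarrow> real) \<Rightarrow> real \<Rightarrow> bool" where
  "strongly_convex_on S f \<sigma> \<longleftrightarrow> convex S \<and>
     (\<forall>x\<in>S. \<forall>y\<in>S. \<forall>t::real. 0 \<le> t \<and> t \<le> 1 \<longrightarrow>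
        f (t *\<^sub>R x + (1 - t) *\<^sub>R y) \<le> t * f x + (1 - t) * f y - \<sigma> / 2 * t * (1 - t) * (norm (x - y))\<^sup>2)"

text \<open>Moreau envelope of f_i(.,x_{-i}) + indicator of X_i, evaluated at (x_i, x_{-i})\<close>
definition moreau :: "('n::finite \<Rightarrow> 'p) \<Rightarrow> ('p \<Rightarrow> real^'n \<Rightarrow> real) \<Rightarrow> ('p \<Rightarrow> (real^'n) set)
    \<Rightarrow> real \<Rightarrow> 'p \<Rightarrow> real^'n \<Rightarrow> real" where
  "moreau blk f Xs \<eta> i x =
     (INF y\<in>Xs i. f i (bupd blk i y x) + 1 / (2 * \<eta>) * (norm (y - bproj blk i x))\<^sup>2)"

definition bresp :: "('n::finite \<Rightarrow> 'p) \<Rightarrow> ('p \<Rightarrow> real^'n \<Rightarrow> real) \<Rightarrow> ('p \<Rightarrow> (real^'n) set)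
    \<Rightarrow> real \<Rightarrow> real \<Rightarrow> 'p \<Rightarrow> real^'n \<Rightarrow> real^'n" where
  "bresp blk f Xs \<eta> \<mu> i x =
     (THE z. z \<in> bsub blk i \<and>
        (\<forall>z'\<in>bsub blk i.
           moreau blk f Xs \<eta> i (bupd blk i z x) + \<mu> / 2 * (norm (z - bproj blk i x))\<^sup>2
           \<le> moreau blk f Xs \<eta> i (bupd blk i z' x) + \<mu> / 2 * (norm (z' - bproj blk i x))\<^sup>2))"

definition xhat :: "('n::finite \<Rightarrow> 'p) \<Rightarrow> ('p \<Rightarrow> real^'n \<Rightarrow> real) \<Rightarrow> ('p \<Rightarrow> (real^'n) set)
    \<Rightarrow> real \<Rightarrow> real \<Rightarrow> real^'n \<Rightarrow> real^'n" where
  "xhat blk f Xs \<eta> \<mu> x = (\<chi> j. bresp blk f Xs \<eta> \<mu> (blk j) x $ j)"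

definition Gamma1 :: "real \<Rightarrow> real \<Rightarrow> ('p::finite \<Rightarrow> real) \<Rightarrow> ('p \<Rightarrow> real) \<Rightarrow> real^'p^'p" where
  "Gamma1 \<eta> \<mu> \<sigma> L = (\<chi> i j. if i = j then \<mu> / (\<sigma> i / (\<eta> * \<sigma> i + 1) + \<mu>)
                               else L i / (\<sigma> i / (\<eta> * \<sigma> i + 1) + \<mu>))"

definition nash :: "('n::finite \<Rightarrow> 'p) \<Rightarrow> ('p \<Rightarrow> real^'n \<Rightarrow> real) \<Rightarrow> ('p \<Rightarrow> (real^'n) set)
    \<Rightarrow> real^'n \<Rightarrow> bool" where
  "nash blk f Xs x \<longleftrightarrow> (\<forall>i. bproj blk i x \<in> Xs i) \<and>
     (\<forall>i. \<forall>z\<in>Xs i. f i x \<le> f i (bupd blk i z x))"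

end

theory Submission
  imports Defs
begin


lemma bproj_in_bsub: "bproj blk i x \<in> bsub blk i"
  by (simp add: bproj_def bsub_def)

lemma bproj_bsub: "z \<in> bsub blk i \<Longrightarrow> bproj blk i z = z"
  by (auto simp: bproj_def bsub_def vec_eq_iff)

lemma bproj_bupd: "bproj blk i (bupd blk i z x) = bproj blk i z"
  by (auto simp: bproj_def bupd_def vec_eq_iff)

lemma bupd_bupd: "bupd blk i y (bupd blk i z x) = bupd blk i y x"
  by (auto simp: bupd_def vec_eq_iff)

lemma bupd_self: "bupd blk i (bproj blk i x) x = x"
  by (auto simp: bproj_def bupd_def vec_eq_iff)

lemma bproj_diff: "bproj blk i (x - y) = bproj blk i x - bproj blk i y"
  by (auto simp: bproj_def vec_eq_iff)

lemma bothers_diff: "bothers blk i (x - y) = bothers blk i x - bothers blk i y"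
  by (auto simp: bothers_def vec_eq_iff)

lemma bsub_closed: "closed (bsub blk i)"
proof -
  have "bsub blk i = (\<Inter>j\<in>{j. blk j \<noteq> i}. {v. v $ j = 0})"
    by (auto simp: bsub_def)
  moreover have "closed {v::real^'a. v $ j = 0}" for j
    by (intro closed_Collect_eq continuous_intros)
  ultimately show ?thesis by auto
qed

lemma bsub_convex: "convex (bsub blk i)"
  unfolding convex_def bsub_def by auto

lemma bsub_ne: "bsub blk i \<noteq> {}"
  by (metis bproj_in_bsub empty_iff)

lemma sum_bproj:
  fixes blk :: "'n::finite \<Rightarrow> 'p::finite"
  shows "(\<Sum>i\<in>UNIV. bproj blk i x) = x"
proof -
  have "(\<Sum>i\<in>UNIV. bproj blk i x) $ k = x $ k" for k
  proof -
    have "(\<Sum>i\<in>UNIV. bproj blk i x) $ k = (\<Sum>i\<in>UNIV. (if blk k = i then x $ k else 0))"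
      by (simp add: bproj_def sum_component)
    also have "\<dots> = x $ k" by (simp add: sum.delta')
    finally show ?thesis .
  qed
  then show ?thesis by (simp add: vec_eq_iff)
qed

lemma norm_le_sum_bproj:
  fixes blk :: "'n::finite \<Rightarrow> 'p::finite"
  shows "norm x \<le> (\<Sum>i\<in>UNIV. norm (bproj blk i x))"
  by (metis norm_sum sum_bproj)

lemma bothers_sum:
  fixes blk :: "'n::finite \<Rightarrow> 'p::finite"
  shows "bothers blk i x = (\<Sum>j\<in>UNIV-{i}. bproj blk j x)"
proof -
  have "(\<Sum>j\<in>UNIV-{i}. bproj blk j x) $ k = bothers blk i x $ k" for k
  proof -
    have "(\<Sum>j\<in>UNIV-{i}. bproj blk j x) $ k = (\<Sum>j\<in>UNIV-{i}. (if blk k = j then x $ k else 0))"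
      by (simp add: bproj_def sum_component)
    also have "\<dots> = bothers blk i x $ k" by (auto simp add: sum.delta' bothers_def)
    finally show ?thesis .
  qed
  then show ?thesis by (simp add: vec_eq_iff)
qed

lemma norm_bothers_le:
  fixes blk :: "'n::finite \<Rightarrow> 'p::finite"
  shows "norm (bothers blk i x) \<le> (\<Sum>j\<in>UNIV-{i}. norm (bproj blk j x))"
  by (metis norm_sum bothers_sum)

lemma norm2_bproj: 
  fixes blk :: "'n::finite \<Rightarrow> 'p::finite"
  shows "(norm x)\<^sup>2 = (\<Sum>i\<in>UNIV. (norm (bproj blk i x))\<^sup>2)"
proof -
  have "(norm (bproj blk i x))\<^sup>2 = (\<Sum>k\<in>UNIV. (if blk k = i then (x $ k)\<^sup>2 else 0))" for i
    unfolding norm_vec_def L2_set_def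
    by (subst real_sqrt_pow2) (auto intro!: sum_nonneg sum.cong simp: bproj_def)
  then have "(\<Sum>i\<in>UNIV. (norm (bproj blk i x))\<^sup>2) = (\<Sum>i\<in>UNIV. \<Sum>k\<in>UNIV. (if blk k = i then (x $ k)\<^sup>2 else 0))"
    by simp
  also have "\<dots> = (\<Sum>k\<in>UNIV. \<Sum>i\<in>UNIV. (if blk k = i then (x $ k)\<^sup>2 else 0))"
    by (rule sum.swap)
  also have "\<dots> = (\<Sum>k\<in>UNIV. (x $ k)\<^sup>2)" by (simp add: sum.delta')
  also have "\<dots> = (norm x)\<^sup>2" unfolding norm_vec_def L2_set_def
    by (subst real_sqrt_pow2) (auto intro: sum_nonneg)
  finally show ?thesis by simp
qed

lemma starnorm_eq: "starnorm blk x = norm x"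
proof -
  have "(starnorm blk x)\<^sup>2 = (\<Sum>i\<in>UNIV. (norm (bproj blk i x))\<^sup>2)"
    unfolding starnorm_def norm_vec_def L2_set_def
    by (subst real_sqrt_pow2) (auto intro: sum_nonneg)
  also have "\<dots> = (norm x)\<^sup>2" by (simp add: norm2_bproj[of x blk])
  finally have "(starnorm blk x)\<^sup>2 = (norm x)\<^sup>2" .
  then show ?thesis by (simp add: starnorm_def power2_eq_iff_nonneg)
qed




lemma norm_convex_comb_sq:
  fixes u v :: "'a::real_inner"
  shows "(norm (t *\<^sub>R u + (1 - t) *\<^sub>R v))\<^sup>2 = t * (norm u)\<^sup>2 + (1 - t) * (norm v)\<^sup>2 - t * (1 - t) * (norm (u - v))\<^sup>2"
  unfolding power2_norm_eq_inner
  by (simp add: inner_add_left inner_add_right inner_diff_left inner_diff_right inner_commute algebra_simps)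

lemma sc_subset:
  assumes "strongly_convex_on S f c" "T \<subseteq> S" "convex T"
  shows "strongly_convex_on T f c"
  using assms unfolding strongly_convex_on_def by blast

lemma sc_add:
  assumes "strongly_convex_on S f a" "strongly_convex_on S g b"
  shows "strongly_convex_on S (\<lambda>x. f x + g x) (a + b)"
  using assms unfolding strongly_convex_on_def
proof (intro conjI ballI allI impI)
  fix x y and t :: real assume H: "x \<in> S" "y \<in> S" "0 \<le> t \<and> t \<le> 1"
  have 1: "f (t *\<^sub>R x + (1 - t) *\<^sub>R y) \<le> t * f x + (1 - t) * f y - a / 2 * t * (1 - t) * (norm (x - y))\<^sup>2"
    using assms H unfolding strongly_convex_on_def by blast
  have 2: "g (t *\<^sub>R x + (1 - t) *\<^sub>R y) \<le> t * g x + (1 - t) * g y - b / 2 * t * (1 - t) * (norm (x - y))\<^sup>2"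
    using assms H unfolding strongly_convex_on_def by blast
  show "f (t *\<^sub>R x + (1 - t) *\<^sub>R y) + g (t *\<^sub>R x + (1 - t) *\<^sub>R y)
    \<le> t * (f x + g x) + (1 - t) * (f y + g y) - (a + b) / 2 * t * (1 - t) * (norm (x - y))\<^sup>2"
    using add_mono[OF 1 2] by (simp add: algebra_simps add_divide_distrib)
qed (use assms in \<open>auto simp: strongly_convex_on_def\<close>)

lemma sc_quad:
  fixes p :: "'a::real_inner"
  assumes "convex S"
  shows "strongly_convex_on S (\<lambda>z. a / 2 * (norm (z - p))\<^sup>2) a"
  unfolding strongly_convex_on_def
proof (intro conjI ballI allI impI assms)
  fix x y :: 'a and t :: real assume H: "0 \<le> t \<and> t \<le> 1"
  have e: "t *\<^sub>R x + (1 - t) *\<^sub>R y - p = t *\<^sub>R (x - p) + (1 - t) *\<^sub>R (y - p)"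
    by (simp add: algebra_simps)
  have NN: "(norm (t *\<^sub>R x + (1 - t) *\<^sub>R y - p))\<^sup>2 = t * (norm (x - p))\<^sup>2 + (1 - t) * (norm (y - p))\<^sup>2 - t * (1 - t) * (norm (x - y))\<^sup>2"
    unfolding e by (subst norm_convex_comb_sq) simp
  then show "a / 2 * (norm (t *\<^sub>R x + (1 - t) *\<^sub>R y - p))\<^sup>2 \<le> t * (a / 2 * (norm (x - p))\<^sup>2) +
      (1 - t) * (a / 2 * (norm (y - p))\<^sup>2) - a / 2 * t * (1 - t) * (norm (x - y))\<^sup>2"
    by (simp only: NN) (simp add: field_simps)
qed

lemma sc_convex: "strongly_convex_on S f c \<Longrightarrow> convex S"
  by (simp add: strongly_convex_on_def)

lemma le_of_all_t:
  fixes A B :: real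
  assumes "B \<ge> 0" "\<And>t. 0 < t \<Longrightarrow> t \<le> 1 \<Longrightarrow> A \<ge> B * (1 - t)"
  shows "A \<ge> B"
proof (rule ccontr)
  assume "\<not> A \<ge> B"
  then have AB: "A < B" by simp
  have "A \<ge> 0" using assms(2)[of 1] by simp
  then have Bp: "B > 0" using AB by simp
  define t where "t = (B - A) / (2 * B)"
  have "0 < t" "t \<le> 1" using AB Bp \<open>A \<ge> 0\<close> by (auto simp: t_def field_simps)
  then have "A \<ge> B * (1 - t)" using assms(2) by blast
  moreover have "B * (1 - t) = (A + B) / 2" using Bp by (simp add: t_def field_simps)
  ultimately show False using AB by simp
qed

lemma sc_growth:
  assumes sc: "strongly_convex_on S f c" and c: "c \<ge> 0"
    and zS: "z \<in> S" and mS: "m \<in> S" and min: "\<And>y. y \<in> S \<Longrightarrow> f m \<le> f y"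
  shows "f z \<ge> f m + c / 2 * (norm (z - m))\<^sup>2"
proof -
  have "f z - f m \<ge> c / 2 * (norm (z - m))\<^sup>2"
  proof (rule le_of_all_t)
    show "0 \<le> c / 2 * (norm (z - m))\<^sup>2" using c by simp
    fix t :: real assume t: "0 < t" "t \<le> 1"
    have cv: "convex S" using sc by (simp add: strongly_convex_on_def)
    have inS: "t *\<^sub>R z + (1 - t) *\<^sub>R m \<in> S"
      using convexD[OF cv zS mS, of t "1 - t"] t by simp
    have "f m \<le> f (t *\<^sub>R z + (1 - t) *\<^sub>R m)" by (rule min[OF inS])
    also have "\<dots> \<le> t * f z + (1 - t) * f m - c / 2 * t * (1 - t) * (norm (z - m))\<^sup>2"
      using sc zS mS t unfolding strongly_convex_on_def by auto
    finally have "t * (c / 2 * (norm (z - m))\<^sup>2 * (1 - t)) \<le> t * (f z - f m)"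
      by (simp add: algebra_simps)
    then show "c / 2 * (norm (z - m))\<^sup>2 * (1 - t) \<le> f z - f m"
      using t by simp
  qed
  then show ?thesis by simp
qed

lemma sc_exists_min:
  fixes f :: "'a::euclidean_space \<Rightarrow> real"
  assumes sc: "strongly_convex_on S f c" and c: "c > 0"
    and cl: "closed S" and ne: "S \<noteq> {}" and ct: "continuous_on S f"
  shows "\<exists>m\<in>S. \<forall>y\<in>S. f m \<le> f y"
proof -
  obtain p where pS: "p \<in> S" using ne by blast
  have cv: "convex S" using sc by (simp add: strongly_convex_on_def)
  have K1c: "compact (S \<inter> cball p 1)" using cl by (simp add: compact_Int_closed closed_Int_compact)
  obtain q where qK: "q \<in> S \<inter> cball p 1" and qmin: "\<And>y. y \<in> S \<inter> cball p 1 \<Longrightarrow> f q \<le> f y"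
    using continuous_attains_inf[OF K1c _ continuous_on_subset[OF ct]] pS by fastforce
  define m where "m = f q"
  have mp: "m \<le> f p" using qmin pS by (simp add: m_def)
  define R1 where "R1 = 2 + 2 * (f p - m) / c"
  have R1ge: "R1 \<ge> 2" using mp c by (simp add: R1_def)
  have far: "f y \<ge> f p" if yS: "y \<in> S" and yR: "norm (y - p) > R1" for y
  proof -
    define R where "R = norm (y - p)"
    have R2: "R > 2" using yR R1ge by (simp add: R_def)
    define t where "t = 1 / R"
    have t: "0 < t" "t \<le> 1" using R2 by (auto simp: t_def)
    define qq where "qq = t *\<^sub>R y + (1 - t) *\<^sub>R p"
    have qqS: "qq \<in> S" using convexD[OF cv yS pS, of t "1 - t"] t by (simp add: qq_def)
    have "qq - p = t *\<^sub>R (y - p)" by (simp add: qq_def algebra_simps)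
    have ynp: "y \<noteq> p" using R2 by (auto simp: R_def)
    then have "norm (qq - p) = 1" using \<open>qq - p = t *\<^sub>R (y - p)\<close>  by (simp add: t_def R_def)
    then have "qq \<in> cball p 1" by (simp add: dist_norm norm_minus_commute)
    then have mq: "m \<le> f qq" using qmin qqS by (simp add: m_def)
    have "f qq \<le> t * f y + (1 - t) * f p - c / 2 * t * (1 - t) * R\<^sup>2"
      using sc yS pS t unfolding strongly_convex_on_def qq_def R_def by auto
    then have "m \<le> t * f y + (1 - t) * f p - c / 2 * t * (1 - t) * R\<^sup>2" using mq by simp
    then have "R * m \<le> R * (t * f y + (1 - t) * f p - c / 2 * t * (1 - t) * R\<^sup>2)"
      using R2 by (simp add: mult_left_mono)
    also have "\<dots> = f y + (R - 1) * f p - c / 2 * (R - 1) * R"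
      using R2 by (simp add: t_def field_simps power2_eq_square)
    finally have key: "f y \<ge> m + (R - 1) * (m - f p + c / 2 * R)"
      by (simp add: algebra_simps)
    have "c / 2 * R \<ge> c / 2 * R1" using yR c by (simp add: R_def)
    also have "c / 2 * R1 = c + (f p - m)" using c by (simp add: R1_def field_simps)
    finally have "m - f p + c / 2 * R \<ge> c" by simp
    then have "(R - 1) * (m - f p + c / 2 * R) \<ge> (R - 1) * c" using R2 c by simp
    moreover have "(R - 1) * c \<ge> (R1 - 1) * c" using yR c by (simp add: R_def)
    moreover have "(R1 - 1) * c = c + 2 * (f p - m)" using c by (simp add: R1_def field_simps)
    ultimately show ?thesis using key mp c by simp
  qed
  have K2c: "compact (S \<inter> cball p R1)" using cl by (simp add: closed_Int_compact)
  obtain z where zK: "z \<in> S \<inter> cball p R1" and zmin: "\<And>y. y \<in> S \<inter> cball p R1 \<Longrightarrow> f z \<le> f y"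
    using continuous_attains_inf[OF K2c _ continuous_on_subset[OF ct]] pS R1ge by fastforce
  have "f z \<le> f y" if "y \<in> S" for y
  proof (cases "norm (y - p) > R1")
    case True
    have "f z \<le> f p" using zmin pS R1ge by simp
    then show ?thesis using far[OF that True] by simp
  next
    case False
    then have "y \<in> cball p R1" by (simp add: dist_norm norm_minus_commute)
    then show ?thesis using zmin that by simp
  qed
  then show ?thesis using zK by blast
qed




lemma moreau_ineq:
  fixes U D :: "'a::real_inner"
  assumes s: "s > 0" and e: "e > 0"
  shows "s / (e * s + 1) * (norm D)\<^sup>2 \<le> s * (norm U)\<^sup>2 + (norm (U - D))\<^sup>2 / e"
proof -
  define k where "k = e * s + 1"
  have k: "k > 0" using s e by (simp add: k_def add_pos_pos)
  define u2 where "u2 = U \<bullet> U"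
  define d2 where "d2 = D \<bullet> D"
  define ud where "ud = U \<bullet> D"
  have h0: "0 \<le> (norm (k *\<^sub>R U - D))\<^sup>2" by simp
  have h1: "(norm (k *\<^sub>R U - D))\<^sup>2 = k * k * u2 - 2 * k * ud + d2"
    unfolding power2_norm_eq_inner u2_def d2_def ud_def
    by (simp add: inner_diff_left inner_diff_right inner_commute algebra_simps)
  have h2: "(norm (U - D))\<^sup>2 = u2 - 2 * ud + d2"
    unfolding power2_norm_eq_inner u2_def d2_def ud_def
    by (simp add: inner_diff_left inner_diff_right inner_commute algebra_simps)
  have h3: "(norm U)\<^sup>2 = u2" "(norm D)\<^sup>2 = d2"
    unfolding power2_norm_eq_inner u2_def d2_def by simp_all
  have "s * u2 + (u2 - 2 * ud + d2) / e - s / k * d2 = (k * k * u2 - 2 * k * ud + d2) / (e * k)"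
    using k e by (simp add: field_simps k_def)
  also have "\<dots> \<ge> 0" using h0 h1 k e by simp
  finally show ?thesis unfolding h2 h3 k_def[symmetric] by simp
qed

lemma comb_aux:
  fixes Em gy ga gb e s t P Q A B R :: real
  assumes e: "e > 0" and h1: "Em \<le> gy + 1 / (2 * e) * Q"
    and h2: "gy \<le> t * ga + (1 - t) * gb - s / 2 * t * (1 - t) * P"
    and h3: "Q = t * A + (1 - t) * B - t * (1 - t) * R"
  shows "Em \<le> t * (ga + 1 / (2 * e) * A) + (1 - t) * (gb + 1 / (2 * e) * B) - t * (1 - t) / 2 * (s * P + R / e)"
proof -
  have "t * (ga + 1 / (2 * e) * A) + (1 - t) * (gb + 1 / (2 * e) * B) - t * (1 - t) / 2 * (s * P + R / e)
     = (t * ga + (1 - t) * gb - s / 2 * t * (1 - t) * P) + 1 / (2 * e) * (t * A + (1 - t) * B - t * (1 - t) * R)"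
    using e by (simp add: field_simps)
  then show ?thesis using h1 h2 h3 by simp
qed

lemma aux2:
  fixes t s N Y X :: real
  assumes "t * (1 - t) * (s * N) \<le> t * (1 - t) * Y"
  shows "X - t * (1 - t) / 2 * Y \<le> X - s / 2 * t * (1 - t) * N"
proof -
  have "s / 2 * t * (1 - t) * N = (t * (1 - t) * (s * N)) / 2" by simp
  moreover have "t * (1 - t) / 2 * Y = (t * (1 - t) * Y) / 2" by simp
  ultimately show ?thesis using assms by linarith
qed

locale game =
  fixes blk :: "'n::finite \<Rightarrow> 'p::finite"
    and f :: "'p \<Rightarrow> real^'n \<Rightarrow> real"
    and Xs :: "'p \<Rightarrow> (real^'n) set"
    and \<sigma> L :: "'p \<Rightarrow> real"
    and \<eta> \<mu> :: real
  assumes X_sub: "\<And>i. Xs i \<subseteq> bsub blk i"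
    and X_ne: "\<And>i. Xs i \<noteq> {}"
    and X_closed: "\<And>i. closed (Xs i)"
    and X_convex: "\<And>i. convex (Xs i)"
    and mu_pos: "\<mu> > 0" and eta_pos: "\<eta> > 0"
    and sigma_pos: "\<And>i. \<sigma> i > 0"
    and L_nonneg: "\<And>i. L i \<ge> 0"
    and A1: "\<And>i x. strongly_convex_on (bsub blk i) (\<lambda>z. f i (bupd blk i z x)) (\<sigma> i)
                    \<and> continuous_on (bsub blk i) (\<lambda>z. f i (bupd blk i z x))"
    and A2: "\<And>i x y w. \<exists>g1 g2.
               GDERIV (\<lambda>v. moreau blk f Xs \<eta> i (bupd blk i v y)) x :> g1 \<and>
               GDERIV (\<lambda>v. moreau blk f Xs \<eta> i (bupd blk i v w)) x :> g2 \<and>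
               norm (g1 - g2) \<le> L i * norm (bothers blk i y - bothers blk i w)"
begin

definition G where "G i x y = f i (bupd blk i y x) + 1 / (2 * \<eta>) * (norm (y - bproj blk i x))\<^sup>2"

lemma G_sc: "strongly_convex_on (Xs i) (G i x) (\<sigma> i + 1 / \<eta>)"
proof -
  have 1: "strongly_convex_on (Xs i) (\<lambda>z. f i (bupd blk i z x)) (\<sigma> i)"
    using sc_subset[OF conjunct1[OF A1] X_sub X_convex] .
  have 2: "strongly_convex_on (Xs i) (\<lambda>z. (1 / \<eta>) / 2 * (norm (z - bproj blk i x))\<^sup>2) (1 / \<eta>)"
    by (rule sc_quad[OF X_convex])
  have "G i x = (\<lambda>z. f i (bupd blk i z x) + (1 / \<eta>) / 2 * (norm (z - bproj blk i x))\<^sup>2)"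
    by (simp add: G_def fun_eq_iff)
  then show ?thesis using sc_add[OF 1 2] by simp
qed

lemma G_cont: "continuous_on (Xs i) (G i x)"
proof -
  have "continuous_on (Xs i) (\<lambda>z. f i (bupd blk i z x))"
    using continuous_on_subset[OF conjunct2[OF A1] X_sub] .
  then show ?thesis unfolding G_def by (intro continuous_intros)
qed

lemma G_min: "\<exists>p\<in>Xs i. \<forall>y\<in>Xs i. G i x p \<le> G i x y"
  by (rule sc_exists_min[OF G_sc _ X_closed X_ne G_cont])
     (use sigma_pos eta_pos in \<open>simp add: add_pos_pos\<close>)

lemma moreau_G: "moreau blk f Xs \<eta> i x = (INF y\<in>Xs i. G i x y)"
  by (simp add: moreau_def G_def)

lemma moreau_attain: "\<exists>p\<in>Xs i. (\<forall>y\<in>Xs i. G i x p \<le> G i x y) \<and> moreau blk f Xs \<eta> i x = G i x p"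
proof -
  obtain p where p: "p \<in> Xs i" "\<forall>y\<in>Xs i. G i x p \<le> G i x y" using G_min by blast
  have "(INF y\<in>Xs i. G i x y) = G i x p"
  proof (rule antisym)
    show "(INF y\<in>Xs i. G i x y) \<le> G i x p"
      by (rule cINF_lower[OF _ p(1)]) (use p in \<open>auto simp: bdd_below_def\<close>)
    show "G i x p \<le> (INF y\<in>Xs i. G i x y)"
      by (rule cINF_greatest) (use p X_ne in auto)
  qed
  then show ?thesis using p by (auto simp: moreau_G)
qed

lemma moreau_le: "y \<in> Xs i \<Longrightarrow> moreau blk f Xs \<eta> i x \<le> G i x y"
  using moreau_attain[of i x] by auto

lemma moreau_ge: "(\<And>y. y \<in> Xs i \<Longrightarrow> B \<le> G i x y) \<Longrightarrow> B \<le> moreau blk f Xs \<eta> i x"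
  using moreau_attain[of i x] by auto

lemma G_bupd: "z \<in> bsub blk i \<Longrightarrow> G i (bupd blk i z x) y = f i (bupd blk i y x) + 1 / (2 * \<eta>) * (norm (y - z))\<^sup>2"
  by (simp add: G_def bupd_bupd bproj_bupd bproj_bsub)

definition E where "E i x z = moreau blk f Xs \<eta> i (bupd blk i z x)"

definition sig' where "sig' i = \<sigma> i / (\<eta> * \<sigma> i + 1)"

lemma sig'_pos: "sig' i > 0"
  using sigma_pos[of i] eta_pos by (simp add: sig'_def add_pos_pos)

lemma E_sc: "strongly_convex_on (bsub blk i) (E i x) (sig' i)"
  unfolding strongly_convex_on_def
proof (intro conjI ballI allI impI bsub_convex)
  fix a b and t :: real assume aS: "a \<in> bsub blk i" and bS: "b \<in> bsub blk i" and t: "0 \<le> t \<and> t \<le> 1"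
  obtain pa where pa: "pa \<in> Xs i" "E i x a = G i (bupd blk i a x) pa"
    using moreau_attain[of i "bupd blk i a x"] by (auto simp: E_def)
  obtain pb where pb: "pb \<in> Xs i" "E i x b = G i (bupd blk i b x) pb"
    using moreau_attain[of i "bupd blk i b x"] by (auto simp: E_def)
  define m where "m = t *\<^sub>R a + (1 - t) *\<^sub>R b"
  have mS: "m \<in> bsub blk i" using convexD[OF bsub_convex aS bS, of t "1 - t"] t by (simp add: m_def)
  define ym where "ym = t *\<^sub>R pa + (1 - t) *\<^sub>R pb"
  have ymS: "ym \<in> Xs i" using convexD[OF X_convex pa(1) pb(1), of t "1 - t"] t by (simp add: ym_def)
  have paS: "pa \<in> bsub blk i" and pbS: "pb \<in> bsub blk i" using pa pb X_sub by auto
  define g where "g y = f i (bupd blk i y x)" for y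
  have Ea: "E i x a = g pa + 1 / (2 * \<eta>) * (norm (pa - a))\<^sup>2" using pa G_bupd[OF aS] by (simp add: g_def)
  have Eb: "E i x b = g pb + 1 / (2 * \<eta>) * (norm (pb - b))\<^sup>2" using pb G_bupd[OF bS] by (simp add: g_def)
  have "E i x m \<le> G i (bupd blk i m x) ym" unfolding E_def by (rule moreau_le[OF ymS])
  also have "\<dots> = g ym + 1 / (2 * \<eta>) * (norm (ym - m))\<^sup>2" using G_bupd[OF mS] by (simp add: g_def)
  finally have 1: "E i x m \<le> g ym + 1 / (2 * \<eta>) * (norm (ym - m))\<^sup>2" .
  have 2: "g ym \<le> t * g pa + (1 - t) * g pb - \<sigma> i / 2 * t * (1 - t) * (norm (pa - pb))\<^sup>2"
    using conjunct1[OF A1[of i x]] paS pbS t unfolding strongly_convex_on_def g_def ym_def by blast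
  have e3: "ym - m = t *\<^sub>R (pa - a) + (1 - t) *\<^sub>R (pb - b)" by (simp add: ym_def m_def algebra_simps)
  have e4: "(pa - a) - (pb - b) = (pa - pb) - (a - b)" by simp
  have 3: "(norm (ym - m))\<^sup>2 = t * (norm (pa - a))\<^sup>2 + (1 - t) * (norm (pb - b))\<^sup>2 - t * (1 - t) * (norm ((pa - pb) - (a - b)))\<^sup>2"
    unfolding e3 by (subst norm_convex_comb_sq) (simp only: e4)
  have 4: "sig' i * (norm (a - b))\<^sup>2 \<le> \<sigma> i * (norm (pa - pb))\<^sup>2 + (norm ((pa - pb) - (a - b)))\<^sup>2 / \<eta>"
    unfolding sig'_def by (rule moreau_ineq[OF sigma_pos eta_pos])
  have tt: "t * (1 - t) \<ge> 0" using t by simp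
  have 5: "t * (1 - t) * (sig' i * (norm (a - b))\<^sup>2) \<le> t * (1 - t) * (\<sigma> i * (norm (pa - pb))\<^sup>2 + (norm ((pa - pb) - (a - b)))\<^sup>2 / \<eta>)"
    by (rule mult_left_mono[OF 4 tt])
  have "E i x m \<le> t * E i x a + (1 - t) * E i x b - t * (1 - t) / 2 * (\<sigma> i * (norm (pa - pb))\<^sup>2 + (norm ((pa - pb) - (a - b)))\<^sup>2 / \<eta>)"
    unfolding Ea Eb by (rule comb_aux[OF eta_pos 1 2 3])
  also have "\<dots> \<le> t * E i x a + (1 - t) * E i x b - sig' i / 2 * t * (1 - t) * (norm (a - b))\<^sup>2"
    by (rule aux2[OF 5])
  finally show "E i x (t *\<^sub>R a + (1 - t) *\<^sub>R b) \<le> t * E i x a + (1 - t) * E i x b - sig' i / 2 * t * (1 - t) * (norm (a - b))\<^sup>2"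
    by (simp add: m_def)
qed

end



context game begin

definition phi where "phi i x z = E i x z + \<mu> / 2 * (norm (z - bproj blk i x))\<^sup>2"

lemma E_deriv: "\<exists>g. ((E i x) has_derivative (\<lambda>h. h \<bullet> g)) (at v)"
proof -
  obtain g1 g2 where "GDERIV (\<lambda>v. moreau blk f Xs \<eta> i (bupd blk i v x)) v :> g1"
    using A2[where i=i and x=v and y=x and w=x] by blast
  then show ?thesis unfolding gderiv_def E_def by blast
qed

lemma E_cont: "continuous_on S (E i x)"
proof -
  have "isCont (E i x) v" for v
    using E_deriv[of i x v] has_derivative_continuous by blast
  then show ?thesis by (simp add: continuous_at_imp_continuous_on)
qed

lemma phi_sc: "strongly_convex_on (bsub blk i) (phi i x) (sig' i + \<mu>)"
proof -
  have "phi i x = (\<lambda>z. E i x z + \<mu> / 2 * (norm (z - bproj blk i x))\<^sup>2)"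
    by (simp add: phi_def fun_eq_iff)
  then show ?thesis using sc_add[OF E_sc sc_quad[OF bsub_convex]] by simp
qed

lemma phi_cont: "continuous_on (bsub blk i) (phi i x)"
  unfolding phi_def by (intro continuous_intros E_cont)

lemma phi_ex1: "\<exists>!z. z \<in> bsub blk i \<and> (\<forall>z'\<in>bsub blk i. phi i x z \<le> phi i x z')"
proof -
  have cpos: "sig' i + \<mu> > 0" using sig'_pos mu_pos by (simp add: add_pos_pos)
  obtain m where m: "m \<in> bsub blk i" "\<forall>y\<in>bsub blk i. phi i x m \<le> phi i x y"
    using sc_exists_min[OF phi_sc cpos bsub_closed bsub_ne phi_cont] by blast
  show ?thesis
  proof (rule ex1I[of _ m])
    show "m \<in> bsub blk i \<and> (\<forall>z'\<in>bsub blk i. phi i x m \<le> phi i x z')" using m by blast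
    fix z assume z: "z \<in> bsub blk i \<and> (\<forall>z'\<in>bsub blk i. phi i x z \<le> phi i x z')"
    have "phi i x z \<ge> phi i x m + (sig' i + \<mu>) / 2 * (norm (z - m))\<^sup>2"
      using sc_growth[OF phi_sc _ _ m(1)] m z cpos by simp
    moreover have "phi i x z \<le> phi i x m" using z m by blast
    ultimately have "(sig' i + \<mu>) / 2 * (norm (z - m))\<^sup>2 \<le> 0" by simp
    then have "(norm (z - m))\<^sup>2 \<le> 0" using cpos by (simp add: mult_le_0_iff)
    then show "z = m" by simp
  qed
qed

lemma bresp_phi: "bresp blk f Xs \<eta> \<mu> i x = (THE z. z \<in> bsub blk i \<and> (\<forall>z'\<in>bsub blk i. phi i x z \<le> phi i x z'))"
  by (simp add: bresp_def phi_def E_def)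

lemma bresp_min: "bresp blk f Xs \<eta> \<mu> i x \<in> bsub blk i"
  "\<And>z'. z' \<in> bsub blk i \<Longrightarrow> phi i x (bresp blk f Xs \<eta> \<mu> i x) \<le> phi i x z'"
  using theI'[OF phi_ex1[of i x]] unfolding bresp_phi[symmetric] by blast+

lemma bresp_eq: "z \<in> bsub blk i \<Longrightarrow> (\<And>z'. z' \<in> bsub blk i \<Longrightarrow> phi i x z \<le> phi i x z') \<Longrightarrow> bresp blk f Xs \<eta> \<mu> i x = z"
  unfolding bresp_phi by (rule the1_equality[OF phi_ex1]) blast

lemma bresp_growth: "z \<in> bsub blk i \<Longrightarrow>
   phi i x z \<ge> phi i x (bresp blk f Xs \<eta> \<mu> i x) + (sig' i + \<mu>) / 2 * (norm (z - bresp blk f Xs \<eta> \<mu> i x))\<^sup>2"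
  by (rule sc_growth[OF phi_sc _ _ bresp_min(1) bresp_min(2)]) (use sig'_pos mu_pos in \<open>auto intro: add_nonneg_nonneg less_imp_le\<close>)

lemma E_diff_lip:
  "norm ((E i y a - E i w a) - (E i y b - E i w b)) \<le> L i * norm (bothers blk i y - bothers blk i w) * norm (a - b)"
proof -
  have "\<forall>v. \<exists>g1 g2. ((E i y) has_derivative (\<lambda>h. h \<bullet> g1)) (at v) \<and> ((E i w) has_derivative (\<lambda>h. h \<bullet> g2)) (at v) \<and>
      norm (g1 - g2) \<le> L i * norm (bothers blk i y - bothers blk i w)"
    using A2 unfolding gderiv_def E_def by blast
  then obtain G1 G2 where GG: "\<And>v. ((E i y) has_derivative (\<lambda>h. h \<bullet> G1 v)) (at v)"
      "\<And>v. ((E i w) has_derivative (\<lambda>h. h \<bullet> G2 v)) (at v)"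
      "\<And>v. norm (G1 v - G2 v) \<le> L i * norm (bothers blk i y - bothers blk i w)"
    by metis
  have d: "((\<lambda>v. E i y v - E i w v) has_derivative (\<lambda>h. h \<bullet> (G1 v - G2 v))) (at v within UNIV)" for v
    using has_derivative_diff[OF GG(1) GG(2)] by (simp add: inner_diff_right)
  have ob: "onorm (\<lambda>h. h \<bullet> (G1 v - G2 v)) \<le> L i * norm (bothers blk i y - bothers blk i w)" for v
  proof -
    have "onorm (\<lambda>h::real^'n. h \<bullet> (G1 v - G2 v)) \<le> norm (G1 v - G2 v)"
      by (rule onorm_le) (metis Cauchy_Schwarz_ineq2 mult.commute real_norm_def)
    then show ?thesis using GG(3)[of v] by simp
  qed
  show ?thesis
    using differentiable_bound[OF convex_UNIV d ob, of a b] by simp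
qed

lemma bresp_lip:
  "(sig' i + \<mu>) * norm (bresp blk f Xs \<eta> \<mu> i y - bresp blk f Xs \<eta> \<mu> i w)
     \<le> \<mu> * norm (bproj blk i y - bproj blk i w) + L i * norm (bothers blk i y - bothers blk i w)"
proof -
  define zy where "zy = bresp blk f Xs \<eta> \<mu> i y"
  define zw where "zw = bresp blk f Xs \<eta> \<mu> i w"
  define c where "c = sig' i + \<mu>"
  define d where "d = norm (zy - zw)"
  define Lo where "Lo = L i * norm (bothers blk i y - bothers blk i w)"
  define yi where "yi = bproj blk i y"
  define wi where "wi = bproj blk i w"
  have zyS: "zy \<in> bsub blk i" and zwS: "zw \<in> bsub blk i" using bresp_min by (auto simp: zy_def zw_def)
  have g1: "phi i y zw \<ge> phi i y zy + c / 2 * d\<^sup>2"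
    using bresp_growth[OF zwS, of y] by (simp add: zy_def c_def d_def norm_minus_commute)
  have g2: "phi i w zy \<ge> phi i w zw + c / 2 * d\<^sup>2"
    using bresp_growth[OF zyS, of w] by (simp add: zw_def c_def d_def)
  have q: "(norm (zw - yi))\<^sup>2 - (norm (zw - wi))\<^sup>2 - (norm (zy - yi))\<^sup>2 + (norm (zy - wi))\<^sup>2
        = 2 * ((zy - zw) \<bullet> (yi - wi))"
    unfolding power2_norm_eq_inner
    by (simp add: inner_diff_left inner_diff_right inner_commute algebra_simps)
  have q2: "(zy - zw) \<bullet> (yi - wi) \<le> d * norm (yi - wi)"
    unfolding d_def by (metis Cauchy_Schwarz_ineq2 abs_le_D1 real_norm_def)
  have h: "(E i y zw - E i w zw) - (E i y zy - E i w zy) \<le> Lo * d"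
    using E_diff_lip[where i=i and y=y and w=w and a=zw and b=zy] unfolding Lo_def d_def
    by (simp add: norm_minus_commute)
  have "c * d\<^sup>2 \<le> (E i y zw - E i w zw) - (E i y zy - E i w zy)
          + \<mu> / 2 * ((norm (zw - yi))\<^sup>2 - (norm (zw - wi))\<^sup>2 - (norm (zy - yi))\<^sup>2 + (norm (zy - wi))\<^sup>2)"
    using g1 g2 unfolding phi_def yi_def wi_def by (simp add: algebra_simps)
  also have "\<dots> = (E i y zw - E i w zw) - (E i y zy - E i w zy) + \<mu> * ((zy - zw) \<bullet> (yi - wi))"
    unfolding q by simp
  also have "\<dots> \<le> Lo * d + \<mu> * (d * norm (yi - wi))"
  proof -
    have "\<mu> * ((zy - zw) \<bullet> (yi - wi)) \<le> \<mu> * (d * norm (yi - wi))"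
      using q2 mu_pos by (simp add: mult_left_mono)
    then show ?thesis using h by linarith
  qed
  finally have main: "c * d * d \<le> (Lo + \<mu> * norm (yi - wi)) * d"
    by (simp add: algebra_simps power2_eq_square)
  have "c * d \<le> Lo + \<mu> * norm (yi - wi)"
  proof (cases "d = 0")
    case True
    then show ?thesis using L_nonneg mu_pos by (simp add: Lo_def)
  next
    case False
    then have "d > 0" by (simp add: d_def)
    then show ?thesis using main by simp
  qed
  then show ?thesis by (simp add: c_def d_def zy_def zw_def Lo_def yi_def wi_def algebra_simps)
qed

end



context game begin

lemma bproj_xhat: "bproj blk i (xhat blk f Xs \<eta> \<mu> x) = bresp blk f Xs \<eta> \<mu> i x"
proof -
  have "bresp blk f Xs \<eta> \<mu> i x \<in> bsub blk i" by (rule bresp_min)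
  then show ?thesis by (auto simp: bproj_def xhat_def bsub_def vec_eq_iff)
qed

lemma xhat_fix_iff: "xhat blk f Xs \<eta> \<mu> x = x \<longleftrightarrow> (\<forall>i. bresp blk f Xs \<eta> \<mu> i x = bproj blk i x)"
proof
  assume "xhat blk f Xs \<eta> \<mu> x = x"
  then show "\<forall>i. bresp blk f Xs \<eta> \<mu> i x = bproj blk i x" by (metis bproj_xhat)
next
  assume H: "\<forall>i. bresp blk f Xs \<eta> \<mu> i x = bproj blk i x"
  show "xhat blk f Xs \<eta> \<mu> x = x"
    by (auto simp: vec_eq_iff xhat_def H bproj_def)
qed

lemma E_self: "E i x (bproj blk i x) = moreau blk f Xs \<eta> i x"
  by (simp add: E_def bupd_self)

lemma fix_nash_i:
  assumes fx: "bresp blk f Xs \<eta> \<mu> i x = bproj blk i x"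
  shows "bproj blk i x \<in> Xs i \<and> (\<forall>z\<in>Xs i. f i x \<le> f i (bupd blk i z x))"
proof -
  define xi where "xi = bproj blk i x"
  have xiS: "xi \<in> bsub blk i" by (simp add: xi_def bproj_in_bsub)
  have phimin: "phi i x xi \<le> phi i x z" if "z \<in> bsub blk i" for z
    using bresp_min(2)[OF that, of x] fx by (simp add: xi_def)
  have Emin: "E i x xi \<le> E i x z" if zS: "z \<in> bsub blk i" for z
  proof -
    define K where "K = (norm (z - xi))\<^sup>2"
    have "E i x z - E i x xi + \<mu> / 2 * K \<ge> \<mu> / 2 * K"
    proof (rule le_of_all_t)
      show "0 \<le> \<mu> / 2 * K" using mu_pos by (simp add: K_def)
      fix t :: real assume t: "0 < t" "t \<le> 1"
      define zt where "zt = t *\<^sub>R z + (1 - t) *\<^sub>R xi"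
      have ztS: "zt \<in> bsub blk i" using convexD[OF bsub_convex zS xiS, of t "1 - t"] t by (simp add: zt_def)
      have "zt - xi = t *\<^sub>R (z - xi)" by (simp add: zt_def algebra_simps)
      then have nz: "(norm (zt - xi))\<^sup>2 = t\<^sup>2 * K" by (simp add: K_def power_mult_distrib)
      have "E i x zt \<le> t * E i x z + (1 - t) * E i x xi - sig' i / 2 * t * (1 - t) * (norm (z - xi))\<^sup>2"
        using E_sc[of i x] zS xiS t unfolding strongly_convex_on_def zt_def by auto
      moreover have "sig' i / 2 * t * (1 - t) * (norm (z - xi))\<^sup>2 \<ge> 0"
        using sig'_pos[of i] t by simp
      ultimately have c1: "E i x zt \<le> t * E i x z + (1 - t) * E i x xi" by linarith
      have "E i x xi = phi i x xi" by (simp add: phi_def xi_def)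
      also have "\<dots> \<le> phi i x zt" by (rule phimin[OF ztS])
      also have "\<dots> = E i x zt + \<mu> / 2 * (norm (zt - xi))\<^sup>2" by (simp add: phi_def xi_def)
      also have "\<dots> = E i x zt + \<mu> / 2 * (t\<^sup>2 * K)" by (simp only: nz)
      finally have "E i x xi \<le> t * E i x z + (1 - t) * E i x xi + \<mu> / 2 * (t\<^sup>2 * K)" using c1 by simp
      then have "t * (E i x xi - E i x z - \<mu> / 2 * t * K) \<le> 0"
        by (simp add: algebra_simps power2_eq_square)
      then have "E i x xi - E i x z - \<mu> / 2 * t * K \<le> 0" using t by (simp add: mult_le_0_iff)
      moreover have "\<mu> / 2 * K * (1 - t) = \<mu> / 2 * K - \<mu> / 2 * t * K" by (simp add: field_simps)
      ultimately show "\<mu> / 2 * K * (1 - t) \<le> E i x z - E i x xi + \<mu> / 2 * K"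
        by linarith
    qed
    then show ?thesis by simp
  qed
  obtain p where p: "p \<in> Xs i" "moreau blk f Xs \<eta> i x = G i x p"
    using moreau_attain[of i x] by blast
  have pS: "p \<in> bsub blk i" using p X_sub by auto
  have Ep: "E i x p \<le> f i (bupd blk i p x)"
    using moreau_le[OF p(1), of "bupd blk i p x"] G_bupd[OF pS, of x p] by (simp add: E_def)
  have Exi: "E i x xi = f i (bupd blk i p x) + 1 / (2 * \<eta>) * (norm (p - xi))\<^sup>2"
    using p(2) E_self[of i x] by (simp add: G_def xi_def)
  have le0: "1 / (2 * \<eta>) * (norm (p - xi))\<^sup>2 \<le> 0" using Emin[OF pS] Ep Exi by linarith
  have pxi: "p = xi"
  proof (rule ccontr)
    assume "p \<noteq> xi"
    then have "0 < 1 / (2 * \<eta>) * (norm (p - xi))\<^sup>2" using eta_pos by simp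
    then show False using le0 by linarith
  qed
  have fx: "f i x = E i x xi"
    using Exi pxi by (simp add: xi_def bupd_self)
  show ?thesis
  proof (intro conjI ballI)
    show "bproj blk i x \<in> Xs i" using p(1) pxi xi_def by simp
    fix z assume zX: "z \<in> Xs i"
    have zS: "z \<in> bsub blk i" using zX X_sub by auto
    have "f i x \<le> E i x z" using fx Emin[OF zS] by simp
    also have "\<dots> \<le> f i (bupd blk i z x)"
      using moreau_le[OF zX, of "bupd blk i z x"] G_bupd[OF zS, of x z] by (simp add: E_def)
    finally show "f i x \<le> f i (bupd blk i z x)" .
  qed
qed

lemma nash_fix_i:
  assumes xi: "bproj blk i x \<in> Xs i" and opt: "\<forall>z\<in>Xs i. f i x \<le> f i (bupd blk i z x)"
  shows "bresp blk f Xs \<eta> \<mu> i x = bproj blk i x"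
proof (rule bresp_eq)
  show "bproj blk i x \<in> bsub blk i" by (rule bproj_in_bsub)
  fix z' assume z'S: "z' \<in> bsub blk i"
  have "phi i x (bproj blk i x) = E i x (bproj blk i x)" by (simp add: phi_def)
  also have "\<dots> \<le> G i x (bproj blk i x)" unfolding E_self by (rule moreau_le[OF xi])
  also have "\<dots> = f i x" by (simp add: G_def bupd_self)
  also have "f i x \<le> E i x z'"
    unfolding E_def
  proof (rule moreau_ge)
    fix y assume yX: "y \<in> Xs i"
    have yS: "y \<in> bsub blk i" using yX X_sub by auto
    have "f i x \<le> f i (bupd blk i y x)" using opt yX by blast
    also have "\<dots> \<le> G i (bupd blk i z' x) y" using G_bupd[OF z'S, of x y] eta_pos by simp
    finally show "f i x \<le> G i (bupd blk i z' x) y" .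
  qed
  also have "\<dots> \<le> phi i x z'" by (simp add: phi_def mu_pos less_imp_le)
  finally show "phi i x (bproj blk i x) \<le> phi i x z'" .
qed

lemma fix_iff_nash: "xhat blk f Xs \<eta> \<mu> x = x \<longleftrightarrow> nash blk f Xs x"
  unfolding xhat_fix_iff nash_def using fix_nash_i nash_fix_i by blast

lemma Gamma_sum:
  "(\<Sum>j\<in>UNIV. Gamma1 \<eta> \<mu> \<sigma> L $ i $ j * n j)
    = (\<mu> * n i + L i * (\<Sum>j\<in>UNIV-{i}. n j)) / (sig' i + \<mu>)"
proof -
  have "(\<Sum>j\<in>UNIV. Gamma1 \<eta> \<mu> \<sigma> L $ i $ j * n j)
      = Gamma1 \<eta> \<mu> \<sigma> L $ i $ i * n i + (\<Sum>j\<in>UNIV-{i}. Gamma1 \<eta> \<mu> \<sigma> L $ i $ j * n j)"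
    by (simp add: sum.remove)
  also have "(\<Sum>j\<in>UNIV-{i}. Gamma1 \<eta> \<mu> \<sigma> L $ i $ j * n j) = (\<Sum>j\<in>UNIV-{i}. L i / (sig' i + \<mu>) * n j)"
    by (rule sum.cong) (auto simp: Gamma1_def sig'_def)
  also have "\<dots> = L i / (sig' i + \<mu>) * (\<Sum>j\<in>UNIV-{i}. n j)" by (simp add: sum_distrib_left)
  finally show ?thesis by (simp add: Gamma1_def sig'_def add_divide_distrib)
qed

lemma part_i:
  "norm (bresp blk f Xs \<eta> \<mu> i y - bresp blk f Xs \<eta> \<mu> i w)
     \<le> (\<Sum>j\<in>UNIV. Gamma1 \<eta> \<mu> \<sigma> L $ i $ j * norm (bproj blk j y - bproj blk j w))"
proof -
  have cpos: "sig' i + \<mu> > 0" using sig'_pos mu_pos by (simp add: add_pos_pos)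
  have "norm (bothers blk i y - bothers blk i w) \<le> (\<Sum>j\<in>UNIV-{i}. norm (bproj blk j y - bproj blk j w))"
    using norm_bothers_le[of blk i "y - w"] by (simp add: bothers_diff bproj_diff)
  then have "L i * norm (bothers blk i y - bothers blk i w) \<le> L i * (\<Sum>j\<in>UNIV-{i}. norm (bproj blk j y - bproj blk j w))"
    using L_nonneg by (simp add: mult_left_mono)
  then have "(sig' i + \<mu>) * norm (bresp blk f Xs \<eta> \<mu> i y - bresp blk f Xs \<eta> \<mu> i w)
      \<le> \<mu> * norm (bproj blk i y - bproj blk i w) + L i * (\<Sum>j\<in>UNIV-{i}. norm (bproj blk j y - bproj blk j w))"
    using bresp_lip[of i y w] by linarith
  then show ?thesis unfolding Gamma_sum using cpos by (simp add: field_simps)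
qed

lemma contraction:
  assumes A3: "onorm (\<lambda>v. Gamma1 \<eta> \<mu> \<sigma> L *v v) < 1"
  shows "\<exists>q. 0 \<le> q \<and> q < 1 \<and> (\<forall>y w. starnorm blk (xhat blk f Xs \<eta> \<mu> y - xhat blk f Xs \<eta> \<mu> w)
                                        \<le> q * starnorm blk (y - w))"
proof (intro exI conjI allI)
  let ?q = "onorm (\<lambda>v. Gamma1 \<eta> \<mu> \<sigma> L *v v)"
  have bl: "bounded_linear (\<lambda>v. Gamma1 \<eta> \<mu> \<sigma> L *v v)" by simp
  show "0 \<le> ?q" by (rule onorm_pos_le[OF bl])
  show "?q < 1" by (rule A3)
  fix y w
  define dv where "dv = (\<chi> j. norm (bproj blk j (y - w)))"
  define av where "av = (\<chi> j. norm (bproj blk j (xhat blk f Xs \<eta> \<mu> y - xhat blk f Xs \<eta> \<mu> w)))"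
  have "av $ i \<le> (Gamma1 \<eta> \<mu> \<sigma> L *v dv) $ i" for i
    using part_i[of i y w]
    by (simp add: av_def dv_def matrix_vector_mult_def bproj_diff bproj_xhat)
  moreover have "0 \<le> av $ i" for i by (simp add: av_def)
  ultimately have "norm av \<le> norm (Gamma1 \<eta> \<mu> \<sigma> L *v dv)"
    unfolding norm_vec_def by (intro L2_set_mono) (auto intro: order_trans[OF _ abs_ge_self])
  also have "\<dots> \<le> ?q * norm dv" by (rule onorm[OF bl])
  finally show "starnorm blk (xhat blk f Xs \<eta> \<mu> y - xhat blk f Xs \<eta> \<mu> w) \<le> ?q * starnorm blk (y - w)"
    by (simp add: starnorm_def av_def dv_def)
qed

end



lemma det_conv:
  fixes a b :: "nat \<Rightarrow> real"
  assumes a0: "\<And>k. a k \<ge> 0" and b0: "\<And>k. b k \<ge> 0" and bs: "summable b"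
    and q: "0 \<le> q" "q < 1" and rec: "\<And>k. a (Suc k) \<le> q * a k + b k"
  shows "a \<longlonglongrightarrow> 0"
proof -
  define B where "B = suminf b"
  have Sb: "(\<Sum>k<n. b k) \<le> B" for n unfolding B_def
    by (rule sum_le_suminf[OF bs]) (auto simp: b0)
  have bound: "(\<Sum>k<n. a k) \<le> (a 0 + B) / (1 - q)" for n
  proof -
    have "(\<Sum>k<Suc n. a k) = a 0 + (\<Sum>k<n. a (Suc k))" by (rule sum.lessThan_Suc_shift)
    also have "(\<Sum>k<n. a (Suc k)) \<le> (\<Sum>k<n. q * a k + b k)" by (rule sum_mono[OF rec])
    also have "\<dots> = q * (\<Sum>k<n. a k) + (\<Sum>k<n. b k)" by (simp add: sum.distrib sum_distrib_left)
    finally have 1: "(\<Sum>k<Suc n. a k) \<le> a 0 + q * (\<Sum>k<n. a k) + B" using Sb[of n] by simp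
    have 2: "(\<Sum>k<n. a k) \<le> (\<Sum>k<Suc n. a k)" using a0[of n] by simp
    have "(1 - q) * (\<Sum>k<n. a k) \<le> a 0 + B" using 1 2 by (simp add: algebra_simps)
    then show ?thesis using q by (simp add: field_simps)
  qed
  have "summable a" by (rule summableI_nonneg_bounded[OF a0 bound])
  then show ?thesis by (rule summable_LIMSEQ_zero)
qed

lemma amgm_aux:
  fixes d c :: real
  assumes "c > 0"
  shows "d \<le> 1 / (2 * c) * d\<^sup>2 + c / 2"
proof -
  have "0 \<le> (d - c)\<^sup>2" by simp
  then have "2 * c * d \<le> d\<^sup>2 + c\<^sup>2" by (simp add: power2_eq_square algebra_simps)
  then show ?thesis using assms by (simp add: field_simps power2_eq_square)
qed

lemma norm_bproj_le:
  fixes blk :: "'n::finite \<Rightarrow> 'p::finite"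
  shows "norm (bproj blk i x) \<le> norm x"
proof -
  have "(norm (bproj blk i x))\<^sup>2 \<le> (\<Sum>j\<in>UNIV. (norm (bproj blk j x))\<^sup>2)"
    by (rule member_le_sum) auto
  then have "(norm (bproj blk i x))\<^sup>2 \<le> (norm x)\<^sup>2" by (simp add: norm2_bproj[of x blk])
  then show ?thesis by (simp add: power2_le_iff_abs_le)
qed

lemma bproj_meas:
  fixes blk :: "'n::finite \<Rightarrow> 'p::finite"
  shows "bproj blk i \<in> borel_measurable borel"
proof -
  have "1-lipschitz_on UNIV (bproj blk i)"
    by (rule lipschitz_onI) (auto simp: dist_norm bproj_diff[symmetric] norm_bproj_le)
  then show ?thesis by (intro borel_measurable_continuous_onI lipschitz_on_continuous_on)
qed

context game begin

lemma bresp_meas: "bresp blk f Xs \<eta> \<mu> i \<in> borel_measurable borel"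
proof -
  define C where "C = (\<Sum>j\<in>UNIV. \<bar>Gamma1 \<eta> \<mu> \<sigma> L $ i $ j\<bar>)"
  have "C-lipschitz_on UNIV (bresp blk f Xs \<eta> \<mu> i)"
  proof (rule lipschitz_onI)
    show "0 \<le> C" by (simp add: C_def sum_nonneg)
    fix y w :: "real^'n"
    have "norm (bresp blk f Xs \<eta> \<mu> i y - bresp blk f Xs \<eta> \<mu> i w)
       \<le> (\<Sum>j\<in>UNIV. Gamma1 \<eta> \<mu> \<sigma> L $ i $ j * norm (bproj blk j y - bproj blk j w))"
      by (rule part_i)
    also have "\<dots> \<le> (\<Sum>j\<in>UNIV. \<bar>Gamma1 \<eta> \<mu> \<sigma> L $ i $ j\<bar> * norm (y - w))"
    proof (rule sum_mono)
      fix j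
      have "Gamma1 \<eta> \<mu> \<sigma> L $ i $ j * norm (bproj blk j y - bproj blk j w)
          \<le> \<bar>Gamma1 \<eta> \<mu> \<sigma> L $ i $ j\<bar> * norm (bproj blk j y - bproj blk j w)"
        by (simp add: mult_right_mono)
      also have "\<dots> \<le> \<bar>Gamma1 \<eta> \<mu> \<sigma> L $ i $ j\<bar> * norm (y - w)"
        using norm_bproj_le[of blk j "y - w"] by (simp add: bproj_diff mult_left_mono)
      finally show "Gamma1 \<eta> \<mu> \<sigma> L $ i $ j * norm (bproj blk j y - bproj blk j w)
          \<le> \<bar>Gamma1 \<eta> \<mu> \<sigma> L $ i $ j\<bar> * norm (y - w)" .
    qed
    also have "\<dots> = C * norm (y - w)" by (simp add: C_def sum_distrib_right)
    finally show "dist (bresp blk f Xs \<eta> \<mu> i y) (bresp blk f Xs \<eta> \<mu> i w) \<le> C * dist y w"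
      by (simp add: dist_norm)
  qed
  then show ?thesis by (intro borel_measurable_continuous_onI lipschitz_on_continuous_on)
qed

end



context game begin

lemma integral_D:
  fixes M :: "'w measure" and X :: "nat \<Rightarrow> 'w \<Rightarrow> real^'n"
  assumes P: "prob_space M" and Xm: "\<And>k. X k \<in> borel_measurable M"
    and cond: "AE \<omega> in M.
              nn_cond_exp M (vimage_algebra (space M) (X k) borel)
                 (\<lambda>\<omega>'. ennreal ((norm (bproj blk i (X (Suc k) \<omega>') - bresp blk f Xs \<eta> \<mu> i (X k \<omega>')))\<^sup>2)) \<omega>
              \<le> ennreal ((e)\<^sup>2)"
    and e: "e \<ge> 0" and c: "c > 0" "e \<le> c"
  shows "(\<integral>\<^sup>+ \<omega>. ennreal (norm (bproj blk i (X (Suc k) \<omega>) - bresp blk f Xs \<eta> \<mu> i (X k \<omega>))) \<partial>M) \<le> ennreal c"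
proof -
  interpret prob_space M by (rule P)
  note [measurable] = Xm bresp_meas bproj_meas
  define D where "D \<omega> = norm (bproj blk i (X (Suc k) \<omega>) - bresp blk f Xs \<eta> \<mu> i (X k \<omega>))" for \<omega>
  have Dm[measurable]: "D \<in> borel_measurable M" unfolding D_def by measurable
  define F where "F = vimage_algebra (space M) (X k) borel"
  have subalg: "subalgebra M F"
    unfolding subalgebra_def F_def
  proof
    show "space (vimage_algebra (space M) (X k) borel) = space M" by simp
    show "sets (vimage_algebra (space M) (X k) borel) \<subseteq> sets M"
      unfolding sets_vimage_algebra
      by (rule sets.sigma_sets_subset) (auto intro: measurable_sets[OF Xm])
  qed
  interpret S: finite_measure_subalgebra M F
    by unfold_locales (rule subalg)
  have "(\<integral>\<^sup>+ \<omega>. ennreal ((D \<omega>)\<^sup>2) \<partial>M) = (\<integral>\<^sup>+ \<omega>. 1 * ennreal ((D \<omega>)\<^sup>2) \<partial>M)" by simp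
  also have "\<dots> = (\<integral>\<^sup>+ \<omega>. 1 * nn_cond_exp M F (\<lambda>\<omega>. ennreal ((D \<omega>)\<^sup>2)) \<omega> \<partial>M)"
    by (rule S.nn_cond_exp_intg[symmetric]) auto
  also have "\<dots> \<le> (\<integral>\<^sup>+ \<omega>. ennreal (e\<^sup>2) \<partial>M)"
    using cond by (intro nn_integral_mono_AE) (simp add: F_def D_def)
  also have "\<dots> = ennreal (e\<^sup>2)" by (simp add: emeasure_space_1)
  finally have I2: "(\<integral>\<^sup>+ \<omega>. ennreal ((D \<omega>)\<^sup>2) \<partial>M) \<le> ennreal (e\<^sup>2)" .
  have pw: "ennreal (D \<omega>) \<le> ennreal (1 / (2 * c)) * ennreal ((D \<omega>)\<^sup>2) + ennreal (c / 2)" for \<omega>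
  proof -
    have "D \<omega> \<le> 1 / (2 * c) * (D \<omega>)\<^sup>2 + c / 2" by (rule amgm_aux[OF c(1)])
    then have "ennreal (D \<omega>) \<le> ennreal (1 / (2 * c) * (D \<omega>)\<^sup>2 + c / 2)" by (rule ennreal_leI)
    also have "\<dots> = ennreal (1 / (2 * c) * (D \<omega>)\<^sup>2) + ennreal (c / 2)"
      using c by (intro ennreal_plus) auto
    also have "ennreal (1 / (2 * c) * (D \<omega>)\<^sup>2) = ennreal (1 / (2 * c)) * ennreal ((D \<omega>)\<^sup>2)"
      using c by (intro ennreal_mult) auto
    finally show ?thesis .
  qed
  have "(\<integral>\<^sup>+ \<omega>. ennreal (D \<omega>) \<partial>M) \<le> (\<integral>\<^sup>+ \<omega>. ennreal (1 / (2 * c)) * ennreal ((D \<omega>)\<^sup>2) + ennreal (c / 2) \<partial>M)"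
    by (intro nn_integral_mono pw)
  also have "\<dots> = ennreal (1 / (2 * c)) * (\<integral>\<^sup>+ \<omega>. ennreal ((D \<omega>)\<^sup>2) \<partial>M) + ennreal (c / 2)"
    by (subst nn_integral_add) (auto simp: nn_integral_cmult emeasure_space_1)
  also have "\<dots> \<le> ennreal (1 / (2 * c)) * ennreal (e\<^sup>2) + ennreal (c / 2)"
    by (intro add_mono mult_left_mono I2) auto
  also have "\<dots> = ennreal (e\<^sup>2 / (2 * c) + c / 2)"
    using c by (simp add: ennreal_plus ennreal_mult[symmetric])
  also have "\<dots> \<le> ennreal c"
  proof (rule ennreal_leI)
    have "e\<^sup>2 \<le> c\<^sup>2" using e c by (simp add: power_mono)
    then show "e\<^sup>2 / (2 * c) + c / 2 \<le> c" using c by (simp add: field_simps power2_eq_square)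
  qed
  finally show ?thesis by (simp add: D_def)
qed

end



context game begin

lemma stoch_conv:
  fixes M :: "'w measure" and X :: "nat \<Rightarrow> 'w \<Rightarrow> real^'n" and \<epsilon> :: "'p \<Rightarrow> nat \<Rightarrow> real"
  assumes q: "0 \<le> q" "q < 1" and contr: "\<And>y w. norm (xhat blk f Xs \<eta> \<mu> y - xhat blk f Xs \<eta> \<mu> w) \<le> q * norm (y - w)"
    and P: "prob_space M" and Xm: "\<And>k. X k \<in> borel_measurable M"
    and cond: "\<And>k i. AE \<omega> in M.
              nn_cond_exp M (vimage_algebra (space M) (X k) borel)
                 (\<lambda>\<omega>'. ennreal ((norm (bproj blk i (X (Suc k) \<omega>') - bresp blk f Xs \<eta> \<mu> i (X k \<omega>')))\<^sup>2)) \<omega>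
              \<le> ennreal ((\<epsilon> i k)\<^sup>2)"
    and e0: "\<And>i k. \<epsilon> i k \<ge> 0" and es: "\<And>i. summable (\<epsilon> i)"
    and fx: "xhat blk f Xs \<eta> \<mu> xs = xs"
  shows "AE \<omega> in M. (\<lambda>k. X k \<omega>) \<longlonglongrightarrow> xs"
proof -
  interpret prob_space M by (rule P)
  note [measurable] = Xm bresp_meas bproj_meas
  define D where "D i k \<omega> = norm (bproj blk i (X (Suc k) \<omega>) - bresp blk f Xs \<eta> \<mu> i (X k \<omega>))" for i k \<omega>
  have Dm[measurable]: "(\<lambda>\<omega>. D i k \<omega>) \<in> borel_measurable M" for i k unfolding D_def by measurable
  have sumD: "AE \<omega> in M. summable (\<lambda>k. D i k \<omega>)" for i
  proof -
    define c where "c k = \<epsilon> i k + (1 / 2) ^ k" for k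
    have cpos: "c k > 0" for k using e0[of i k] by (simp add: c_def add_nonneg_pos)
    have cs: "summable c" unfolding c_def by (intro summable_add es) (simp add: summable_geometric)
    have Ik: "(\<integral>\<^sup>+ \<omega>. ennreal (D i k \<omega>) \<partial>M) \<le> ennreal (c k)" for k
      unfolding D_def
      by (rule integral_D[OF P Xm cond[of k i] e0[of i k] cpos[of k]]) (simp add: c_def)
    have "(\<integral>\<^sup>+ \<omega>. (\<Sum>k. ennreal (D i k \<omega>)) \<partial>M) = (\<Sum>k. \<integral>\<^sup>+ \<omega>. ennreal (D i k \<omega>) \<partial>M)"
      by (rule nn_integral_suminf) measurable
    also have "\<dots> \<le> (\<Sum>k. ennreal (c k))" by (intro suminf_le Ik) auto
    also have "\<dots> = ennreal (suminf c)" using cpos cs by (intro suminf_ennreal2) (auto intro: less_imp_le)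
    finally have "(\<integral>\<^sup>+ \<omega>. (\<Sum>k. ennreal (D i k \<omega>)) \<partial>M) \<noteq> \<infinity>"
      using top.extremum_uniqueI by fastforce
    then have "AE \<omega> in M. (\<Sum>k. ennreal (D i k \<omega>)) \<noteq> \<infinity>"
      by (intro nn_integral_PInf_AE) measurable
    then show ?thesis
      by eventually_elim (rule summable_suminf_not_top, auto simp: D_def)
  qed
  have "AE \<omega> in M. \<forall>i\<in>UNIV. summable (\<lambda>k. D i k \<omega>)"
    by (rule AE_finite_allI) (auto intro: sumD)
  then show ?thesis
  proof eventually_elim
    case (elim \<omega>)
    define a where "a k = norm (X k \<omega> - xs)" for k
    define b where "b k = (\<Sum>i\<in>UNIV. D i k \<omega>)" for k
    have "a \<longlonglongrightarrow> 0"
    proof (rule det_conv[OF _ _ _ q])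
      show "a k \<ge> 0" for k by (simp add: a_def)
      show "b k \<ge> 0" for k by (simp add: b_def D_def sum_nonneg)
      show "summable b" unfolding b_def using elim by (intro summable_sum) auto
      fix k
      have "norm (X (Suc k) \<omega> - xhat blk f Xs \<eta> \<mu> (X k \<omega>))
          \<le> (\<Sum>i\<in>UNIV. norm (bproj blk i (X (Suc k) \<omega> - xhat blk f Xs \<eta> \<mu> (X k \<omega>))))"
        by (rule norm_le_sum_bproj)
      also have "\<dots> = b k" by (simp add: b_def D_def bproj_diff bproj_xhat)
      finally have 1: "norm (X (Suc k) \<omega> - xhat blk f Xs \<eta> \<mu> (X k \<omega>)) \<le> b k" .
      have 2: "norm (xhat blk f Xs \<eta> \<mu> (X k \<omega>) - xs) \<le> q * a k"
        using contr[of "X k \<omega>" xs] fx by (simp add: a_def)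
      have "a (Suc k) \<le> norm (X (Suc k) \<omega> - xhat blk f Xs \<eta> \<mu> (X k \<omega>)) + norm (xhat blk f Xs \<eta> \<mu> (X k \<omega>) - xs)"
        unfolding a_def by (rule norm_diff_triangle_le) (rule order_refl)+
      then show "a (Suc k) \<le> q * a k + b k" using 1 2 by simp
    qed
    then have "(\<lambda>k. X k \<omega> - xs) \<longlonglongrightarrow> 0" unfolding a_def by (simp add: tendsto_norm_zero_iff)
    then show ?case by (simp add: LIM_zero_iff)
  qed
qed

end


theorem theorem3p2:
  fixes blk :: "'n::finite \<Rightarrow> 'p::finite"
    and f :: "'p \<Rightarrow> real^'n \<Rightarrow> real"
    and Xs :: "'p \<Rightarrow> (real^'n) set"
    and \<sigma> L :: "'p \<Rightarrow> real"
    and \<eta> \<mu> :: real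
  assumes blk_surj: "surj blk"
    and X_sub: "\<And>i. Xs i \<subseteq> bsub blk i"
    and X_ne: "\<And>i. Xs i \<noteq> {}"
    and X_closed: "\<And>i. closed (Xs i)"
    and X_convex: "\<And>i. convex (Xs i)"
    and mu_pos: "\<mu> > 0" and eta_pos: "\<eta> > 0"
    and sigma_pos: "\<And>i. \<sigma> i > 0"
    and L_nonneg: "\<And>i. L i \<ge> 0"
    and A1: "\<And>i x. strongly_convex_on (bsub blk i) (\<lambda>z. f i (bupd blk i z x)) (\<sigma> i)
                    \<and> continuous_on (bsub blk i) (\<lambda>z. f i (bupd blk i z x))"
    and A2: "\<And>i x y w. \<exists>g1 g2.
               GDERIV (\<lambda>v. moreau blk f Xs \<eta> i (bupd blk i v y)) x :> g1 \<and>
               GDERIV (\<lambda>v. moreau blk f Xs \<eta> i (bupd blk i v w)) x :> g2 \<and>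
               norm (g1 - g2) \<le> L i * norm (bothers blk i y - bothers blk i w)"
    and A3: "onorm (\<lambda>v. Gamma1 \<eta> \<mu> \<sigma> L *v v) < 1"
  shows
    "(\<forall>y w. \<forall>i. norm (bresp blk f Xs \<eta> \<mu> i y - bresp blk f Xs \<eta> \<mu> i w)
                  \<le> (\<Sum>j\<in>UNIV. Gamma1 \<eta> \<mu> \<sigma> L $ i $ j * norm (bproj blk j y - bproj blk j w)))
     \<and> (\<exists>q. 0 \<le> q \<and> q < 1 \<and> (\<forall>y w. starnorm blk (xhat blk f Xs \<eta> \<mu> y - xhat blk f Xs \<eta> \<mu> w)
                                        \<le> q * starnorm blk (y - w)))
     \<and> (\<exists>!x. xhat blk f Xs \<eta> \<mu> x = x)
     \<and> (\<forall>x. xhat blk f Xs \<eta> \<mu> x = x \<longleftrightarrow> nash blk f Xs x)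
     \<and> (\<exists>!x. nash blk f Xs x)
     \<and> (\<forall>(M :: 'w measure) (X :: nat \<Rightarrow> 'w \<Rightarrow> real^'n) (\<epsilon> :: 'p \<Rightarrow> nat \<Rightarrow> real) x0 xs.
          prob_space M \<longrightarrow>
          (\<forall>k. X k \<in> borel_measurable M) \<longrightarrow>
          (\<forall>i. bproj blk i x0 \<in> Xs i) \<longrightarrow>
          (\<forall>\<omega>\<in>space M. X 0 \<omega> = x0) \<longrightarrow>
          (\<forall>k i. \<forall>\<omega>\<in>space M. bproj blk i (X (Suc k) \<omega>) \<in> Xs i) \<longrightarrow>
          (\<forall>k i. AE \<omega> in M.
              nn_cond_exp M (vimage_algebra (space M) (X k) borel)
                 (\<lambda>\<omega>'. ennreal ((norm (bproj blk i (X (Suc k) \<omega>') - bresp blk f Xs \<eta> \<mu> i (X k \<omega>')))\<^sup>2)) \<omega>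
              \<le> ennreal ((\<epsilon> i k)\<^sup>2)) \<longrightarrow>
          (\<forall>i k. \<epsilon> i k \<ge> 0) \<longrightarrow>
          (\<forall>i. summable (\<epsilon> i)) \<longrightarrow>
          xhat blk f Xs \<eta> \<mu> xs = xs \<longrightarrow>
          (AE \<omega> in M. (\<lambda>k. X k \<omega>) \<longlonglongrightarrow> xs))"
  proof -
  interpret game blk f Xs \<sigma> L \<eta> \<mu>
    by (rule game.intro) (fact X_sub X_ne X_closed X_convex mu_pos eta_pos sigma_pos L_nonneg A1 A2)+
  obtain q where q: "0 \<le> q" "q < 1"
    and qc: "\<And>y w. starnorm blk (xhat blk f Xs \<eta> \<mu> y - xhat blk f Xs \<eta> \<mu> w) \<le> q * starnorm blk (y - w)"
    using contraction[OF A3] by blast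
  have qn: "\<And>y w. norm (xhat blk f Xs \<eta> \<mu> y - xhat blk f Xs \<eta> \<mu> w) \<le> q * norm (y - w)"
    using qc by (simp add: starnorm_eq)
  have ufix: "\<exists>!x. xhat blk f Xs \<eta> \<mu> x = x"
    by (rule banach_fix_type[OF q]) (simp add: dist_norm qn)
  have unash: "\<exists>!x. nash blk f Xs x"
    using ufix fix_iff_nash by simp
  show ?thesis
  proof (intro conjI)
    show "\<forall>y w. \<forall>i. norm (bresp blk f Xs \<eta> \<mu> i y - bresp blk f Xs \<eta> \<mu> i w)
                  \<le> (\<Sum>j\<in>UNIV. Gamma1 \<eta> \<mu> \<sigma> L $ i $ j * norm (bproj blk j y - bproj blk j w))"
      using part_i by blast
    show "\<exists>q. 0 \<le> q \<and> q < 1 \<and> (\<forall>y w. starnorm blk (xhat blk f Xs \<eta> \<mu> y - xhat blk f Xs \<eta> \<mu> w)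
                                        \<le> q * starnorm blk (y - w))"
      by (rule contraction[OF A3])
    show "\<exists>!x. xhat blk f Xs \<eta> \<mu> x = x" by (rule ufix)
    show "\<forall>x. xhat blk f Xs \<eta> \<mu> x = x \<longleftrightarrow> nash blk f Xs x" using fix_iff_nash by blast
    show "\<exists>!x. nash blk f Xs x" by (rule unash)
    show "\<forall>(M :: 'w measure) (X :: nat \<Rightarrow> 'w \<Rightarrow> real^'n) (\<epsilon> :: 'p \<Rightarrow> nat \<Rightarrow> real) x0 xs.
          prob_space M \<longrightarrow>
          (\<forall>k. X k \<in> borel_measurable M) \<longrightarrow>
          (\<forall>i. bproj blk i x0 \<in> Xs i) \<longrightarrow>
          (\<forall>\<omega>\<in>space M. X 0 \<omega> = x0) \<longrightarrow>
          (\<forall>k i. \<forall>\<omega>\<in>space M. bproj blk i (X (Suc k) \<omega>) \<in> Xs i) \<longrightarrow>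
          (\<forall>k i. AE \<omega> in M.
              nn_cond_exp M (vimage_algebra (space M) (X k) borel)
                 (\<lambda>\<omega>'. ennreal ((norm (bproj blk i (X (Suc k) \<omega>') - bresp blk f Xs \<eta> \<mu> i (X k \<omega>')))\<^sup>2)) \<omega>
              \<le> ennreal ((\<epsilon> i k)\<^sup>2)) \<longrightarrow>
          (\<forall>i k. \<epsilon> i k \<ge> 0) \<longrightarrow>
          (\<forall>i. summable (\<epsilon> i)) \<longrightarrow>
          xhat blk f Xs \<eta> \<mu> xs = xs \<longrightarrow>
          (AE \<omega> in M. (\<lambda>k. X k \<omega>) \<longlonglongrightarrow> xs)"
    proof (intro allI impI)
      fix M :: "'w measure" and X :: "nat \<Rightarrow> 'w \<Rightarrow> real^'n" and \<epsilon> :: "'p \<Rightarrow> nat \<Rightarrow> real" and x0 xs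
      assume H: "prob_space M" "\<forall>k. X k \<in> borel_measurable M"
        "\<forall>k i. AE \<omega> in M.
              nn_cond_exp M (vimage_algebra (space M) (X k) borel)
                 (\<lambda>\<omega>'. ennreal ((norm (bproj blk i (X (Suc k) \<omega>') - bresp blk f Xs \<eta> \<mu> i (X k \<omega>')))\<^sup>2)) \<omega>
              \<le> ennreal ((\<epsilon> i k)\<^sup>2)"
        "\<forall>i k. \<epsilon> i k \<ge> 0" "\<forall>i. summable (\<epsilon> i)" "xhat blk f Xs \<eta> \<mu> xs = xs"
      show "AE \<omega> in M. (\<lambda>k. X k \<omega>) \<longlonglongrightarrow> xs"
        by (rule stoch_conv[OF q qn H(1)]) (use H in auto)
    qed
  qed
qed

end
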